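(* Let $\{\mathcal{S}(t)\}_{t\ge0}$ be an NGSP and let $p(n,t)=P(\mathcal{S}(t)=n)$ for $n\in\mathbb{Z}$, $t\ge0$. Then for every $t\ge0$ and every integer $n\ge1$, $$p(n,t)=\frac{1}{n}\sum_{j=1}^{k}j\left(\Lambda_{j}(t)\,p(n-j,t)-T_{j}(t)\,p(n+j,t)\right).$$
   Context: Fix $k\in\mathbb{N}$. Given locally integrable functions $\lambda_j:[0,\infty)\to[0,\infty)$, $j=1,\dots,k$, with $\Lambda_j(t)=\int_0^t\lambda_j(u)\,du<\infty$ and $\Lambda_j(s,t)=\Lambda_j(t)-\Lambda_j(s)$, a non-homogeneous generalized counting process (NGCP) with intensities $\lambda_1,\dots,\lambda_k$ is a process $\{\mathcal{M}(t)\}_{t\ge0}$ with $\mathcal{M}(0)=0$, independent increments, and $\mathbb{E}[u^{\mathcal{M}(t)-\mathcal{M}(s)}]=\exp\left(\sum_{j=1}^k\Lambda_j(s,t)(u^j-1)\right)$ for $0\le s<t$. The non-homogeneous generalized Skellam process (NGSP) is $\mathcal{S}(t)=\mathcal{M}_1(t)-\mathcal{M}_2(t)$, where $\mathcal{M}_1,\mathcal{M}_2$ are independent NGCPs with intensities $\lambda_j$ and $\gamma_j$ ($j=1,\dots,k$) respectively, with cumulative functions $\Lambda_j(t)=\int_0^t\lambda_j$ and $T_j(t)=\int_0^t\gamma_j$. *)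

theory Defs
  imports "HOL-Probability.Probability"
begin

definition cumint :: "(real \<Rightarrow> real) \<Rightarrow> real \<Rightarrow> real" where
  "cumint f t = integral {0..t} f"

definition NGCP :: "'a measure \<Rightarrow> nat \<Rightarrow> (nat \<Rightarrow> real \<Rightarrow> real) \<Rightarrow> (real \<Rightarrow> 'a \<Rightarrow> nat) \<Rightarrow> bool" where
  "NGCP M k lam X \<longleftrightarrow>
     (\<forall>t\<ge>0. X t \<in> measurable M (count_space UNIV)) \<and>
     (\<forall>\<omega>\<in>space M. X 0 \<omega> = 0) \<and>
     (\<forall>(n::nat) (ts::nat \<Rightarrow> real). 0 \<le> ts 0 \<and> (\<forall>i<n. ts i < ts (Suc i)) \<longrightarrow>
        prob_space.indep_vars M (\<lambda>_. count_space (UNIV::int set))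
          (\<lambda>i \<omega>. int (X (ts (Suc i)) \<omega>) - int (X (ts i) \<omega>)) {..<n}) \<and>
     (\<forall>s t (u::real). 0 \<le> s \<and> s < t \<and> \<bar>u\<bar> \<le> 1 \<longrightarrow>
        (\<integral>\<omega>. u powi (int (X t \<omega>) - int (X s \<omega>)) \<partial>M)
          = exp (\<Sum>j=1..k. (cumint (lam j) t - cumint (lam j) s) * (u ^ j - 1)))"

end

theory Submission imports Defs begin
lemma powser_unique_zero:
  fixes c :: "nat \<Rightarrow> real"
  assumes r: "0 < r" and s: "\<And>x. \<bar>x\<bar> < r \<Longrightarrow> (\<lambda>n. c n * x ^ n) sums 0"
  shows "c m = 0"
proof -
  have "\<forall>i<N. c i = 0" for N
  proof (induction N)
    case 0 then show ?case by simp
  next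
    case (Suc m)
    have sm: "(\<lambda>n. c (n + m) * x ^ n) sums 0" if "x \<noteq> 0" "norm x < r" for x :: real
    proof -
      have "(\<lambda>n. c n * x ^ n) sums 0" using s that by simp
      then have "(\<lambda>n. c (n + m) * x ^ (n + m)) sums 0"
        using sums_zero_iff_shift[of m "\<lambda>n. c n * x ^ n" 0] Suc.IH by simp
      then have "(\<lambda>n. inverse (x ^ m) * (c (n + m) * x ^ (n + m))) sums (inverse (x^m) * 0)"
        by (rule sums_mult)
      moreover have "\<And>n. inverse (x ^ m) * (c (n + m) * x ^ (n + m)) = c (n + m) * x ^ n"
        using that by (simp add: power_add field_simps)
      ultimately show ?thesis by simp
    qed
    have "((\<lambda>_::real. 0::real) \<longlongrightarrow> c m) (at 0)"
      using powser_limit_0_strong[OF r, of "\<lambda>n. c (n + m)" "\<lambda>_. 0"] sm by simp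
    then have "0 = c m" by (rule LIM_const_eq)
    with Suc.IH show ?case by (auto simp: less_Suc_eq)
  qed
  from this[of "Suc m"] show ?thesis by simp
qed

lemma pgf_recursion_analytic:
  fixes a :: "nat \<Rightarrow> real" and L :: "nat \<Rightarrow> real"
  assumes s: "\<And>z. \<bar>z\<bar> < 1 \<Longrightarrow> (\<lambda>n. a n * z ^ n) sums exp (\<Sum>j\<in>{1..k}. L j * (z ^ j - 1))"
  shows "real (Suc n) * a (Suc n) =
     (\<Sum>j\<in>{1..k}. L j * real j * (if j \<le> Suc n then a (Suc n - j) else 0))"
proof -
  define h where "h z = (\<Sum>j\<in>{1..k}. L j * (z ^ j - 1))" for z :: real
  define h' where "h' z = (\<Sum>j\<in>{1..k}. L j * (real j * z ^ (j - 1)))" for z :: real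
  define b where "b n = (\<Sum>j\<in>{1..k}. L j * real j * (if j \<le> Suc n then a (Suc n - j) else 0))" for n
  have dh: "(h has_field_derivative h' z) (at z)" for z
    unfolding h_def h'_def
    by (auto intro!: derivative_eq_intros DERIV_sum simp: )
  have d: "((\<lambda>z. exp (h z)) has_field_derivative (exp (h z) * h' z)) (at z)" for z
    using dh by (auto intro!: derivative_eq_intros)
  have D: "(\<lambda>n. diffs a n * z ^ n) sums (exp (h z) * h' z)" if "\<bar>z\<bar> < 1" for z
    by (rule termdiffs_sums_strong[where K=1 and f="\<lambda>z. exp (h z)"]) (use s that d in \<open>auto simp: h_def\<close>)
  have B: "(\<lambda>n. b n * z ^ n) sums (exp (h z) * h' z)" if z: "\<bar>z\<bar> < 1" for z
  proof -
    have one: "(\<lambda>n. (if j \<le> Suc n then a (Suc n - j) else 0) * z ^ n) sums (z ^ (j - 1) * exp (h z))"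
      if j: "j \<in> {1..k}" for j
    proof -
      define d where "d = j - 1"
      have jd: "j = Suc d" using j by (simp add: d_def)
      have "(\<lambda>n. z ^ d * (a n * z ^ n)) sums (z ^ d * exp (h z))"
        by (rule sums_mult) (use s z in \<open>simp add: h_def\<close>)
      moreover have "\<And>i. z ^ d * (a i * z ^ i) = (if j \<le> Suc (i + d) then a (Suc (i + d) - j) else 0) * z ^ (i + d)"
        by (simp add: jd power_add)
      ultimately have "(\<lambda>i. (\<lambda>n. (if j \<le> Suc n then a (Suc n - j) else 0) * z ^ n) (i + d)) sums (z ^ d * exp (h z))"
        by simp
      then show ?thesis
        by (subst (asm) sums_zero_iff_shift) (auto simp: jd)
    qed
    have "(\<lambda>n. \<Sum>j\<in>{1..k}. L j * real j * ((if j \<le> Suc n then a (Suc n - j) else 0) * z ^ n))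
          sums (\<Sum>j\<in>{1..k}. L j * real j * (z ^ (j - 1) * exp (h z)))"
      by (intro sums_sum sums_mult one)
    moreover have "\<And>n. (\<Sum>j\<in>{1..k}. L j * real j * ((if j \<le> Suc n then a (Suc n - j) else 0) * z ^ n)) = b n * z ^ n"
      by (simp add: b_def sum_distrib_right mult.assoc)
    moreover have "(\<Sum>j\<in>{1..k}. L j * real j * (z ^ (j - 1) * exp (h z))) = exp (h z) * h' z"
      by (simp add: h'_def sum_distrib_left sum_distrib_right mult_ac)
    ultimately show ?thesis by simp
  qed
  have "(\<lambda>n. (diffs a n - b n) * z ^ n) sums 0" if "\<bar>z\<bar> < 1" for z
    using sums_diff[OF D[OF that] B[OF that]] by (simp add: left_diff_distrib)
  then have "diffs a n - b n = 0"
    by (intro powser_unique_zero[of 1]) auto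
  then show ?thesis by (simp add: diffs_def b_def)
qed

lemma pgf_sums:
  fixes X :: "'a \<Rightarrow> nat" and z :: real
  assumes P: "prob_space M" and X[measurable]: "X \<in> measurable M (count_space UNIV)"
    and z: "\<bar>z\<bar> < 1"
  shows "(\<lambda>n. measure M {\<omega>\<in>space M. X \<omega> = n} * z ^ n) sums (\<integral>\<omega>. z ^ (X \<omega>) \<partial>M)"
proof -
  interpret prob_space M by (rule P)
  define f where "f n \<omega> = z ^ n * indicator {\<omega>\<in>space M. X \<omega> = n} \<omega>" for n \<omega>
  have A[measurable]: "{\<omega>\<in>space M. X \<omega> = n} \<in> sets M" for n by measurable
  have int: "integrable M (f n)" for n
    unfolding f_def by (intro integrable_mult_right integrable_real_indicator) (auto simp: less_top[symmetric])
  have pt: "(\<lambda>n. f n \<omega>) sums z ^ (X \<omega>)" if "\<omega> \<in> space M" for \<omega>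
  proof -
    have "(\<lambda>n. f n \<omega>) = (\<lambda>n. if n = X \<omega> then z ^ n else 0)"
      using that by (auto simp: f_def fun_eq_iff indicator_def)
    then show ?thesis using sums_single[of "X \<omega>" "\<lambda>n. z ^ n"] by simp
  qed
  have ptn: "summable (\<lambda>n. norm (f n \<omega>))" for \<omega>
  proof -
    have "(\<lambda>n. norm (f n \<omega>)) = (\<lambda>n. if n = X \<omega> then norm (f n \<omega>) else 0)"
      by (auto simp: f_def fun_eq_iff indicator_def)
    then show ?thesis using sums_single[of "X \<omega>" "\<lambda>n. norm (f n \<omega>)"] sums_summable by metis
  qed
  have intn: "(\<integral>\<omega>. norm (f n \<omega>) \<partial>M) = \<bar>z\<bar> ^ n * measure M {\<omega>\<in>space M. X \<omega> = n}" for n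
  proof -
    have "(\<integral>\<omega>. norm (f n \<omega>) \<partial>M) = (\<integral>\<omega>. \<bar>z\<bar> ^ n * indicator {\<omega>\<in>space M. X \<omega> = n} \<omega> \<partial>M)"
      by (intro Bochner_Integration.integral_cong) (auto simp: f_def indicator_def power_abs)
    then show ?thesis by simp
  qed
  have "summable (\<lambda>n. (\<integral>\<omega>. norm (f n \<omega>) \<partial>M))"
  proof (rule summable_comparison_test')
    show "summable (\<lambda>n. \<bar>z\<bar> ^ n)" using z by (intro summable_geometric) auto
    show "norm (\<integral>\<omega>. norm (f n \<omega>) \<partial>M) \<le> \<bar>z\<bar> ^ n" for n
      unfolding intn by (simp add: abs_mult mult_left_le)
  qed
  from sums_integral[OF int _ this] ptn
  have "(\<lambda>n. integral\<^sup>L M (f n)) sums (\<integral>\<omega>. (\<Sum>n. f n \<omega>) \<partial>M)" by auto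
  moreover have "(\<integral>\<omega>. (\<Sum>n. f n \<omega>) \<partial>M) = (\<integral>\<omega>. z ^ (X \<omega>) \<partial>M)"
    by (intro Bochner_Integration.integral_cong refl) (use pt sums_unique in metis)
  moreover have "integral\<^sup>L M (f n) = measure M {\<omega>\<in>space M. X \<omega> = n} * z ^ n" for n
    by (simp add: f_def[abs_def] mult.commute)
  ultimately show ?thesis by simp
qed

lemma cumint_0[simp]: "cumint f 0 = 0"
  by (simp add: cumint_def)

lemma NGCP_pgf:
  assumes P: "prob_space M" and N: "NGCP M k lam X" and t: "0 \<le> t" and u: "\<bar>u\<bar> \<le> 1"
  shows "(\<integral>\<omega>. u ^ (X t \<omega>) \<partial>M) = exp (\<Sum>j\<in>{1..k}. cumint (lam j) t * (u ^ j - 1))"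
proof (cases "t = 0")
  case True
  interpret prob_space M by (rule P)
  have "(\<integral>\<omega>. u ^ (X t \<omega>) \<partial>M) = (\<integral>\<omega>. 1 \<partial>M)"
    using N True by (intro Bochner_Integration.integral_cong) (auto simp: NGCP_def)
  then show ?thesis using True by (simp add: prob_space)
next
  case False
  with t have t0: "0 < t" by simp
  from N have X0: "\<And>\<omega>. \<omega> \<in> space M \<Longrightarrow> X 0 \<omega> = 0"
    and pg: "\<And>s t u. 0 \<le> s \<and> s < t \<and> \<bar>u\<bar> \<le> 1 \<Longrightarrow>
        (\<integral>\<omega>. u powi (int (X t \<omega>) - int (X s \<omega>)) \<partial>M)
          = exp (\<Sum>j=1..k. (cumint (lam j) t - cumint (lam j) s) * (u ^ j - 1))"
    unfolding NGCP_def by blast+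
  have "(\<integral>\<omega>. u ^ (X t \<omega>) \<partial>M) = (\<integral>\<omega>. u powi (int (X t \<omega>) - int (X 0 \<omega>)) \<partial>M)"
    using X0 by (intro Bochner_Integration.integral_cong) auto
  also have "\<dots> = exp (\<Sum>j=1..k. (cumint (lam j) t - cumint (lam j) 0) * (u ^ j - 1))"
    using pg[of 0 t u] t0 u by simp
  finally show ?thesis by simp
qed

lemma NGCP_recursion:
  assumes P: "prob_space M" and N: "NGCP M k lam X" and t: "0 \<le> t"
  shows "of_int m * measure M {\<omega>\<in>space M. int (X t \<omega>) = m} =
     (\<Sum>j\<in>{1..k}. real j * cumint (lam j) t * measure M {\<omega>\<in>space M. int (X t \<omega>) = m - int j})"
proof -
  define q where "q m = measure M {\<omega>\<in>space M. int (X t \<omega>) = m}" for m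
  define a where "a n = measure M {\<omega>\<in>space M. X t \<omega> = n}" for n
  have Xm: "X t \<in> measurable M (count_space UNIV)" using N t by (auto simp: NGCP_def)
  have qa: "q (int n) = a n" for n by (simp add: q_def a_def)
  have qneg: "q m = 0" if "m < 0" for m
    using that by (simp add: q_def)
  have s: "(\<lambda>n. a n * z ^ n) sums exp (\<Sum>j\<in>{1..k}. cumint (lam j) t * (z ^ j - 1))" if "\<bar>z\<bar> < 1" for z
    using pgf_sums[OF P Xm that] NGCP_pgf[OF P N t, of z] that by (simp add: a_def)
  show ?thesis
  proof (cases "m \<le> 0")
    case True
    have "q (m - int j) = 0" if "j \<in> {1..k}" for j using that True by (intro qneg) auto
    moreover have "of_int m * q m = 0" using True qneg[of m] by (cases "m = 0") auto
    ultimately show ?thesis by (simp add: q_def[symmetric])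
  next
    case False
    then obtain n where n: "m = int (Suc n)" by (metis gr0_implies_Suc not_le pos_int_cases)
    have "real (Suc n) * a (Suc n) =
       (\<Sum>j\<in>{1..k}. cumint (lam j) t * real j * (if j \<le> Suc n then a (Suc n - j) else 0))"
      by (rule pgf_recursion_analytic[OF s])
    moreover have "(if j \<le> Suc n then a (Suc n - j) else 0) = q (m - int j)" for j
      using qneg[of "m - int j"] qa[of "Suc n - j"] n by (auto simp: of_nat_diff)
    ultimately show ?thesis
      by (simp add: q_def[symmetric] qa[symmetric] n mult_ac)
  qed
qed

lemma has_sum_finite_sum:
  fixes f :: "'i \<Rightarrow> 'b \<Rightarrow> real"
  assumes "finite I" "\<And>i. i \<in> I \<Longrightarrow> (f i has_sum s i) A"
  shows "((\<lambda>x. \<Sum>i\<in>I. f i x) has_sum (\<Sum>i\<in>I. s i)) A"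
  using assms by (induction I rule: finite_induct) (auto intro!: has_sum_add)

lemma has_sum_diff_real:
  fixes f g :: "'b \<Rightarrow> real"
  assumes "(f has_sum a) A" "(g has_sum b) A"
  shows "((\<lambda>x. f x - g x) has_sum (a - b)) A"
proof -
  have "((\<lambda>x. - g x) has_sum (- b)) A" using assms(2) by (simp add: has_sum_uminus)
  from has_sum_add[OF assms(1) this] show ?thesis by simp
qed

theorem theorem3p4:
  fixes M :: "'a measure" and k :: nat
    and lam gam :: "nat \<Rightarrow> real \<Rightarrow> real"
    and M1 M2 :: "real \<Rightarrow> 'a \<Rightarrow> nat"
    and t :: real and n :: int
  assumes "prob_space M"
    and lam_nonneg: "\<And>j x. j \<in> {1..k} \<Longrightarrow> 0 \<le> x \<Longrightarrow> 0 \<le> lam j x"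
    and gam_nonneg: "\<And>j x. j \<in> {1..k} \<Longrightarrow> 0 \<le> x \<Longrightarrow> 0 \<le> gam j x"
    and lam_int: "\<And>j a. j \<in> {1..k} \<Longrightarrow> lam j integrable_on {0..a}"
    and gam_int: "\<And>j a. j \<in> {1..k} \<Longrightarrow> gam j integrable_on {0..a}"
    and M1: "NGCP M k lam M1"
    and M2: "NGCP M k gam M2"
    and indep: "prob_space.indep_var M
        (Pi\<^sub>M {0..} (\<lambda>_. count_space UNIV)) (\<lambda>\<omega>. \<lambda>s\<in>{0..}. M1 s \<omega>)
        (Pi\<^sub>M {0..} (\<lambda>_. count_space UNIV)) (\<lambda>\<omega>. \<lambda>s\<in>{0..}. M2 s \<omega>)"
    and "0 \<le> t" and "1 \<le> n"
  shows "(let p = (\<lambda>m. measure M {\<omega> \<in> space M. int (M1 t \<omega>) - int (M2 t \<omega>) = m})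
          in p n = 1 / of_int n * (\<Sum>j=1..k. real j *
               (cumint (lam j) t * p (n - int j) - cumint (gam j) t * p (n + int j))))"
proof -
  interpret prob_space M by fact
  note t = \<open>0 \<le> t\<close>
  define p where "p m = measure M {\<omega> \<in> space M. int (M1 t \<omega>) - int (M2 t \<omega>) = m}" for m
  define q1 where "q1 m = measure M {\<omega>\<in>space M. int (M1 t \<omega>) = m}" for m
  define q2 where "q2 m = measure M {\<omega>\<in>space M. int (M2 t \<omega>) = m}" for m
  define L where "L j = cumint (lam j) t" for j
  define T where "T j = cumint (gam j) t" for j
  have X1[measurable]: "M1 t \<in> measurable M (count_space UNIV)" using M1 t by (auto simp: NGCP_def)
  have X2[measurable]: "M2 t \<in> measurable M (count_space UNIV)" using M2 t by (auto simp: NGCP_def)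
  have R1: "of_int m * q1 m = (\<Sum>j\<in>{1..k}. real j * L j * q1 (m - int j))" for m
    unfolding q1_def L_def by (rule NGCP_recursion[OF \<open>prob_space M\<close> M1 t])
  have R2: "of_int m * q2 m = (\<Sum>j\<in>{1..k}. real j * T j * q2 (m - int j))" for m
    unfolding q2_def T_def by (rule NGCP_recursion[OF \<open>prob_space M\<close> M2 t])
  have q2neg: "q2 m = 0" if "m < 0" for m using that by (simp add: q2_def)
  have q1neg: "q1 m = 0" if "m < 0" for m using that by (simp add: q1_def)
  have "indep_var (count_space UNIV) ((\<lambda>f. f t) \<circ> (\<lambda>\<omega>. \<lambda>s\<in>{0..}. M1 s \<omega>))
                  (count_space UNIV) ((\<lambda>f. f t) \<circ> (\<lambda>\<omega>. \<lambda>s\<in>{0..}. M2 s \<omega>))"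
    by (rule indep_var_compose[OF indep]) (use t in \<open>auto intro!: measurable_component_singleton\<close>)
  moreover have "((\<lambda>f. f t) \<circ> (\<lambda>\<omega>. \<lambda>s\<in>{0..}. M1 s \<omega>)) = M1 t"
    "((\<lambda>f. f t) \<circ> (\<lambda>\<omega>. \<lambda>s\<in>{0..}. M2 s \<omega>)) = M2 t" using t by auto
  ultimately have ind: "indep_var (count_space UNIV) (M1 t) (count_space UNIV) (M2 t)" by simp
  have joint: "measure M {\<omega>\<in>space M. M1 t \<omega> = a \<and> M2 t \<omega> = b} = q1 (int a) * q2 (int b)" for a b
  proof -
    have "prob ((\<lambda>x. (M1 t x, M2 t x)) -` ({a} \<times> {b}) \<inter> space M) =
      prob (M1 t -` {a} \<inter> space M) * prob (M2 t -` {b} \<inter> space M)"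
      by (rule indep_varD[OF ind]) auto
    moreover have "(\<lambda>x. (M1 t x, M2 t x)) -` ({a} \<times> {b}) \<inter> space M = {\<omega>\<in>space M. M1 t \<omega> = a \<and> M2 t \<omega> = b}"
      by auto
    moreover have "M1 t -` {a} \<inter> space M = {\<omega>\<in>space M. int (M1 t \<omega>) = int a}" by auto
    moreover have "M2 t -` {b} \<inter> space M = {\<omega>\<in>space M. int (M2 t \<omega>) = int b}" by auto
    ultimately show ?thesis by (simp add: q1_def q2_def)
  qed
  have conv: "((\<lambda>m. q1 (c + m) * q2 m) has_sum p c) UNIV" for c
  proof -
    define A where "A i = {\<omega>\<in>space M. int (M1 t \<omega>) - int (M2 t \<omega>) = c \<and> M2 t \<omega> = i}" for i
    have "A i \<in> sets M" for i unfolding A_def by measurable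
    then have As: "range A \<subseteq> sets M" by auto
    have Ad: "disjoint_family A" unfolding A_def disjoint_family_on_def by auto
    have AU: "(\<Union>i. A i) = {\<omega> \<in> space M. int (M1 t \<omega>) - int (M2 t \<omega>) = c}"
      unfolding A_def by auto
    have PA: "measure M (A i) = q1 (c + int i) * q2 (int i)" for i
    proof (cases "c + int i < 0")
      case True
      then have "A i = {}" unfolding A_def by auto
      then show ?thesis using q1neg[OF True] by simp
    next
      case False
      then obtain a where a: "c + int i = int a" by (metis nonneg_int_cases not_less)
      then have "A i = {\<omega>\<in>space M. M1 t \<omega> = a \<and> M2 t \<omega> = i}" unfolding A_def by auto
      then show ?thesis using joint[of a i] a by simp
    qed
    have "(\<lambda>i. measure M (A i)) sums p c"
      using finite_measure_UNION[OF As Ad] AU by (simp add: p_def)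
    then have "((\<lambda>i. q1 (c + int i) * q2 (int i)) has_sum p c) UNIV"
      unfolding PA by (rule sums_nonneg_imp_has_sum) (simp add: q1_def q2_def)
    moreover have "bij_betw int UNIV {0::int..}"
      by (rule bij_betwI[where g=nat]) auto
    ultimately have "((\<lambda>m. q1 (c + m) * q2 m) has_sum p c) {0..}"
      using has_sum_reindex_bij_betw[of int UNIV "{0::int..}" "\<lambda>m. q1 (c + m) * q2 m"] by simp
    then show ?thesis
      by (rule has_sum_cong_neutral[THEN iffD1, rotated -1]) (auto simp: q2neg)
  qed
  have pw: "of_int n * (q1 (n + m) * q2 m) =
      (\<Sum>j\<in>{1..k}. real j * L j * (q1 ((n - int j) + m) * q2 m)) -
      (\<Sum>j\<in>{1..k}. real j * T j * (q1 ((n + int j) + (m - int j)) * q2 (m - int j)))" for m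
  proof -
    have "of_int n * (q1 (n + m) * q2 m) = (of_int (n + m) * q1 (n + m)) * q2 m - q1 (n + m) * (of_int m * q2 m)"
      by (simp add: algebra_simps)
    also have "\<dots> = (\<Sum>j\<in>{1..k}. real j * L j * q1 (n + m - int j)) * q2 m
                   - q1 (n + m) * (\<Sum>j\<in>{1..k}. real j * T j * q2 (m - int j))"
      by (simp only: R1 R2)
    also have "\<dots> = (\<Sum>j\<in>{1..k}. real j * L j * (q1 ((n - int j) + m) * q2 m)) -
      (\<Sum>j\<in>{1..k}. real j * T j * (q1 ((n + int j) + (m - int j)) * q2 (m - int j)))"
      by (simp add: sum_distrib_left sum_distrib_right algebra_simps)
    finally show ?thesis .
  qed
  have H1: "((\<lambda>m. \<Sum>j\<in>{1..k}. real j * L j * (q1 ((n - int j) + m) * q2 m)) has_sum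
              (\<Sum>j\<in>{1..k}. real j * L j * p (n - int j))) UNIV"
    by (intro has_sum_finite_sum has_sum_cmult_right conv) auto
  have sh: "((\<lambda>m. q1 ((n + int j) + (m - int j)) * q2 (m - int j)) has_sum p (n + int j)) UNIV" for j
  proof -
    have "bij_betw (\<lambda>m::int. m - int j) UNIV UNIV"
      by (rule bij_betwI[where g="\<lambda>m. m + int j"]) auto
    from has_sum_reindex_bij_betw[OF this, of "\<lambda>m. q1 ((n + int j) + m) * q2 m"] conv[of "n + int j"]
    show ?thesis by simp
  qed
  have H2: "((\<lambda>m. \<Sum>j\<in>{1..k}. real j * T j * (q1 ((n + int j) + (m - int j)) * q2 (m - int j))) has_sum
              (\<Sum>j\<in>{1..k}. real j * T j * p (n + int j))) UNIV"
    by (intro has_sum_finite_sum has_sum_cmult_right sh) auto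
  have "((\<lambda>m. of_int n * (q1 (n + m) * q2 m)) has_sum
          ((\<Sum>j\<in>{1..k}. real j * L j * p (n - int j)) - (\<Sum>j\<in>{1..k}. real j * T j * p (n + int j)))) UNIV"
    unfolding pw by (rule has_sum_diff_real[OF H1 H2])
  moreover have "((\<lambda>m. of_int n * (q1 (n + m) * q2 m)) has_sum (of_int n * p n)) UNIV"
    by (intro has_sum_cmult_right conv)
  ultimately have E: "of_int n * p n = (\<Sum>j\<in>{1..k}. real j * L j * p (n - int j)) - (\<Sum>j\<in>{1..k}. real j * T j * p (n + int j))"
    using has_sum_unique by blast
  have n0: "(of_int n :: real) \<noteq> 0" using \<open>1 \<le> n\<close> by simp
  have "p n = 1 / of_int n * (\<Sum>j=1..k. real j * (L j * p (n - int j) - T j * p (n + int j)))"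
    using E n0 by (simp add: field_simps sum_subtractf right_diff_distrib mult_ac)
  then show ?thesis by (simp add: p_def[abs_def] L_def T_def Let_def)
qed

end
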